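(* Let $f:\mathbb{R}^n\to\mathbb{R}$ be continuously differentiable, let $s$ be a positive integer, and let $D$ be a diagonal matrix with $D\succ 0$. A point $x\in C_s$ is $D$-stationary if and only if, for every $i\in\{1,\dots,n\}$, $$|\nabla_i f(x)| = 0 \text{ if } i\in I_1(x),\qquad |\nabla_i f(x)|\le D_{ii}^{1/2}\,M_s(D^{1/2}x)\text{ if } i\in I_0(x).$$
   Context: $C_s=\{x\in\mathbb{R}^n:\|x\|_0\le s\}$, where $\|x\|_0$ is the number of nonzero entries of $x$. For $z\in\mathbb{R}^n$, $\mathcal{P}_{C_s}(z)=\operatorname{argmin}_{y\in C_s}\|y-z\|_2^2$ is the (set-valued) projection onto $C_s$, i.e. the set of vectors obtained by keeping $s$ entries of $z$ of largest absolute value and zeroing the rest. A point $x\in C_s$ is called $D$-stationary if $x\in D^{-1/2}\mathcal{P}_{C_s}\big(D^{1/2}x-D^{-1/2}\nabla f(x)\big)$. $I_1(x)=\{i: x_i\neq 0\}$ and $I_0(x)=\{i:x_i=0\}$. $M_s(z)$ denotes the $s$-th largest absolute value among the entries of $z$. *)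

theory Defs
  imports "HOL-Analysis.Analysis" "HOL-Library.Multiset"
begin

definition l0 :: "real^'n \<Rightarrow> nat" where
  "l0 x = card {i. x $ i \<noteq> 0}"

definition Cs :: "nat \<Rightarrow> (real^'n) set" where
  "Cs s = {x. l0 x \<le> s}"

definition proj_Cs :: "nat \<Rightarrow> real^'n \<Rightarrow> (real^'n) set" where
  "proj_Cs s z = {y \<in> Cs s. \<forall>y'\<in>Cs s. (norm (y - z))\<^sup>2 \<le> (norm (y' - z))\<^sup>2}"

definition I1 :: "real^'n \<Rightarrow> 'n set" where "I1 x = {i. x $ i \<noteq> 0}"
definition I0 :: "real^'n \<Rightarrow> 'n set" where "I0 x = {i. x $ i = 0}"

text \<open>M_s(z): the s-th largest absolute value among the entries of z (counted with
  multiplicity); convention 0 if s exceeds the dimension (or s = 0).\<close>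
definition Ms :: "nat \<Rightarrow> real^'n \<Rightarrow> real" where
  "Ms s z = (let L = rev (sorted_list_of_multiset (image_mset (\<lambda>i. \<bar>z $ i\<bar>) (mset_set UNIV)))
             in if 1 \<le> s \<and> s \<le> length L then L ! (s - 1) else 0)"

definition diag_sqrt :: "real^'n^'n \<Rightarrow> real^'n^'n" where
  "diag_sqrt D = (\<chi> i j. if i = j then sqrt (D $ i $ i) else 0)"

text \<open>D-stationarity, where g is the gradient map of f:
  x \<in> C_s and x \<in> D^{-1/2} P_{C_s}(D^{1/2} x - D^{-1/2} \<nabla>f(x)).\<close>
definition D_stationary :: "nat \<Rightarrow> real^'n^'n \<Rightarrow> (real^'n \<Rightarrow> real^'n) \<Rightarrow> real^'n \<Rightarrow> bool" where
  "D_stationary s D g x \<longleftrightarrow> x \<in> Cs s \<and>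
     x \<in> (\<lambda>y. matrix_inv (diag_sqrt D) *v y) `
            proj_Cs s (diag_sqrt D *v x - matrix_inv (diag_sqrt D) *v g x)"

end

theory Submission
  imports Defs
begin


lemma sorted_desc_count:
  fixes L :: "real list"
  assumes "sorted_wrt (\<ge>) L" "k < length L"
  shows "k + 1 \<le> length (filter (\<lambda>u. L!k \<le> u) L)"
    and "length (filter (\<lambda>u. L!k < u) L) \<le> k"
proof -
  have mono: "L!j \<le> L!i" if "i \<le> j" "j < length L" for i j
    using assms(1) that by (metis order.refl le_neq_implies_less sorted_wrt_nth_less)
  have "{0..k} \<subseteq> {i. i < length L \<and> L!k \<le> L!i}"
    using mono assms(2) by auto
  hence "card {0..k} \<le> card {i. i < length L \<and> L!k \<le> L!i}"
    by (intro card_mono) auto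
  thus "k + 1 \<le> length (filter (\<lambda>u. L!k \<le> u) L)"
    by (simp add: length_filter_conv_card)
  have "{i. i < length L \<and> L!k < L!i} \<subseteq> {0..<k}"
    using mono assms(2) by auto (meson linorder_not_le)
  hence "card {i. i < length L \<and> L!k < L!i} \<le> card {0..<k}"
    by (intro card_mono) auto
  thus "length (filter (\<lambda>u. L!k < u) L) \<le> k"
    by (simp add: length_filter_conv_card)
qed

lemma count_filter_img:
  assumes "mset L = image_mset f (mset_set (UNIV::'a::finite set))"
  shows "length (filter P L) = card {i. P (f i)}"
proof -
  have "length (filter P L) = size (filter_mset P (mset L))" by (induction L) auto
  also have "\<dots> = card {i. P (f i)}" by (simp add: assms filter_mset_image_mset)
  finally show ?thesis .
qed

context
  fixes s :: nat and w :: "real^'n"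
begin

definition "LL = rev (sorted_list_of_multiset (image_mset (\<lambda>i. \<bar>w $ i\<bar>) (mset_set (UNIV::'n set))))"

lemma LL_props: "sorted_wrt (\<ge>) LL" "length LL = CARD('n)"
  "mset LL = image_mset (\<lambda>i. \<bar>w $ i\<bar>) (mset_set (UNIV::'n set))"
  proof -
  have "sorted (sorted_list_of_multiset (image_mset (\<lambda>i. \<bar>w $ i\<bar>) (mset_set (UNIV::'n set))))" by simp
  then show "sorted_wrt (\<ge>) LL" unfolding LL_def sorted_wrt_rev by simp
  show "length LL = CARD('n)" unfolding LL_def
    by (metis length_rev mset_sorted_list_of_multiset size_image_mset size_mset size_mset_set)
  show "mset LL = image_mset (\<lambda>i. \<bar>w $ i\<bar>) (mset_set (UNIV::'n set))" by (simp add: LL_def)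
qed

lemma Ms_eq: "Ms s w = (if 1 \<le> s \<and> s \<le> CARD('n) then LL ! (s-1) else 0)"
  unfolding Ms_def Let_def LL_def[symmetric] using LL_props(2) by simp

lemma Ms_nonneg: "0 \<le> Ms s w"
proof (cases "1 \<le> s \<and> s \<le> CARD('n)")
  case True
  hence "LL ! (s-1) \<in> set LL" using LL_props(2) by (intro nth_mem) auto
  hence "LL ! (s-1) \<in># image_mset (\<lambda>i. \<bar>w $ i\<bar>) (mset_set (UNIV::'n set))"
    by (metis LL_props(3) set_mset_mset)
  thus ?thesis using True by (auto simp: Ms_eq)
qed (use Ms_eq in auto)

lemma C1: "1 \<le> s \<Longrightarrow> s \<le> CARD('n) \<Longrightarrow> s \<le> card {i. Ms s w \<le> \<bar>w$i\<bar>}"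
  using sorted_desc_count(1)[OF LL_props(1), of "s-1"]
    count_filter_img[OF LL_props(3), of "\<lambda>u. LL ! (s-1) \<le> u"] LL_props(2)
  by (simp add: Ms_eq)

lemma C2: "1 \<le> s \<Longrightarrow> card {i. Ms s w < \<bar>w$i\<bar>} \<le> s - 1"
proof (cases "s \<le> CARD('n)")
  case True
  assume "1 \<le> s"
  thus ?thesis using True sorted_desc_count(2)[OF LL_props(1), of "s-1"]
    count_filter_img[OF LL_props(3), of "\<lambda>u. LL ! (s-1) < u"] LL_props(2)
  by (simp add: Ms_eq)
next
  case False
  have "card {i. Ms s w < \<bar>w$i\<bar>} \<le> CARD('n)" by (rule card_mono) auto
  thus ?thesis using False by simp
qed

lemma M2: "1 \<le> s \<Longrightarrow> card {i. w$i \<noteq> 0} < s \<Longrightarrow> Ms s w = 0"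
proof (rule ccontr)
  assume a: "1 \<le> s" "card {i. w$i \<noteq> 0} < s" "Ms s w \<noteq> 0"
  hence pos: "Ms s w > 0" using Ms_nonneg by linarith
  hence "s \<le> CARD('n)" by (metis Ms_eq a(3))
  hence "s \<le> card {i. Ms s w \<le> \<bar>w$i\<bar>}" using C1 a by blast
  also have "\<dots> \<le> card {i. w$i \<noteq> 0}" by (rule card_mono) (use pos in auto)
  finally show False using a by simp
qed

lemma M3: "1 \<le> s \<Longrightarrow> card {i. w$i \<noteq> 0} \<le> s \<Longrightarrow> w$j \<noteq> 0 \<Longrightarrow> Ms s w \<le> \<bar>w$j\<bar>"
proof (rule ccontr)
  assume a: "1 \<le> s" "card {i. w$i \<noteq> 0} \<le> s" "w$j \<noteq> 0" "\<not> Ms s w \<le> \<bar>w$j\<bar>"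
  hence pos: "Ms s w > 0" by linarith
  hence "s \<le> CARD('n)" by (metis Ms_eq less_irrefl)
  hence "s \<le> card {i. Ms s w \<le> \<bar>w$i\<bar>}" using C1 a by blast
  also have "\<dots> \<le> card ({i. w$i \<noteq> 0} - {j})" by (rule card_mono) (use pos a in auto)
  also have "\<dots> = card {i. w$i \<noteq> 0} - 1" using a by simp
  finally show False using a by simp
qed

lemma M4: "1 \<le> s \<Longrightarrow> card {i. w$i \<noteq> 0} = s \<Longrightarrow> \<exists>j. w$j \<noteq> 0 \<and> \<bar>w$j\<bar> \<le> Ms s w"
proof (rule ccontr)
  assume a: "1 \<le> s" "card {i. w$i \<noteq> 0} = s" "\<not> (\<exists>j. w$j \<noteq> 0 \<and> \<bar>w$j\<bar> \<le> Ms s w)"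
  have "s = card {i. w$i \<noteq> 0}" using a by simp
  also have "\<dots> \<le> card {i. Ms s w < \<bar>w$i\<bar>}" by (rule card_mono) (use a in force)+
  also have "\<dots> \<le> s - 1" using C2 a by blast
  finally show False using a by simp
qed

end


lemma nsq: "(norm (v::real^'n))^2 = (\<Sum>i\<in>UNIV. (v$i)^2)"
  unfolding power2_norm_eq_inner inner_vec_def by (simp add: power2_eq_square)

lemma sq_le_abs: "\<bar>a::real\<bar> \<le> b \<Longrightarrow> a^2 \<le> b^2"
  by (metis abs_ge_zero abs_le_square_iff abs_of_nonneg order.trans)

lemma proj_char:
  fixes w z :: "real^'n"
  assumes s1: "1 \<le> s" and wC: "w \<in> Cs s"
  shows "w \<in> proj_Cs s z \<longleftrightarrow>
    (\<forall>i. w$i \<noteq> 0 \<longrightarrow> w$i = z$i) \<and> (\<forall>i. w$i = 0 \<longrightarrow> \<bar>z$i\<bar> \<le> Ms s w)"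
proof
  let ?S = "{i. w$i \<noteq> 0}"
  have cS: "card ?S \<le> s" using wC by (simp add: Cs_def l0_def)
  assume P: "w \<in> proj_Cs s z"
  hence opt: "\<And>y. y \<in> Cs s \<Longrightarrow> (\<Sum>i\<in>UNIV. (w$i - z$i)^2) \<le> (\<Sum>i\<in>UNIV. (y$i - z$i)^2)"
    by (auto simp: proj_Cs_def nsq)
  have A: "w$i = z$i" if "w$i \<noteq> 0" for i
  proof (rule ccontr)
    assume ne: "w$i \<noteq> z$i"
    define y where "y = (\<chi> k. if k = i then z$i else w$k)"
    have "{k. y$k \<noteq> 0} \<subseteq> ?S" using that by (auto simp: y_def)
    hence "card {k. y$k \<noteq> 0} \<le> card ?S" by (rule card_mono[rotated]) simp
    hence "y \<in> Cs s" using cS by (simp add: Cs_def l0_def)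
    moreover have "(\<Sum>k\<in>UNIV. (y$k - z$k)^2) < (\<Sum>k\<in>UNIV. (w$k - z$k)^2)"
      by (rule sum_strict_mono_ex1) (use ne in \<open>auto simp: y_def\<close>)
    ultimately show False using opt by fastforce
  qed
  have B: "\<bar>z$i\<bar> \<le> Ms s w" if "w$i = 0" for i
  proof (rule ccontr)
    assume gt: "\<not> \<bar>z$i\<bar> \<le> Ms s w"
    hence zi: "z$i \<noteq> 0" using Ms_nonneg[of s w] by auto
    show False
    proof (cases "card ?S < s")
      case True
      define y where "y = (\<chi> k. if k = i then z$i else w$k)"
      have "{k. y$k \<noteq> 0} \<subseteq> insert i ?S" by (auto simp: y_def)
      hence "card {k. y$k \<noteq> 0} \<le> card (insert i ?S)" by (rule card_mono[rotated]) simp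
      also have "\<dots> \<le> Suc (card ?S)" by (simp add: card_insert_if)
      finally have "y \<in> Cs s" using True by (simp add: Cs_def l0_def)
      moreover have "(\<Sum>k\<in>UNIV. (y$k - z$k)^2) < (\<Sum>k\<in>UNIV. (w$k - z$k)^2)"
        by (rule sum_strict_mono_ex1) (use that zi in \<open>auto simp: y_def\<close>)
      ultimately show False using opt by fastforce
    next
      case False
      hence cs: "card ?S = s" using cS by simp
      obtain j where j: "w$j \<noteq> 0" "\<bar>w$j\<bar> \<le> Ms s w" using M4[OF s1 cs] by blast
      have ij: "i \<noteq> j" using j that by auto
      define y where "y = (\<chi> k. if k = i then z$i else if k = j then 0 else w$k)"
      have "{k. y$k \<noteq> 0} \<subseteq> insert i (?S - {j})" by (auto simp: y_def)
      hence "card {k. y$k \<noteq> 0} \<le> card (insert i (?S - {j}))" by (rule card_mono[rotated]) simp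
      also have "\<dots> \<le> Suc (card (?S - {j}))" by (simp add: card_insert_if)
      also have "\<dots> = card ?S" using j(1) s1 cs by simp
      finally have yC: "y \<in> Cs s" using cs by (simp add: Cs_def l0_def)
      define h where "h k = (y$k - z$k)^2 - (w$k - z$k)^2" for k
      have "(\<Sum>k\<in>UNIV. h k) = (\<Sum>k\<in>{i,j}. h k)"
        by (rule sum.mono_neutral_right) (auto simp: h_def y_def)
      also have "\<dots> = h i + h j" using ij by simp
      also have "\<dots> < 0"
      proof -
        have "h i = - ((z$i)^2)" using that by (simp add: h_def y_def)
        moreover have "h j = (w$j)^2" using A[OF j(1)] ij by (simp add: h_def y_def)
        moreover have "\<bar>w$j\<bar> < \<bar>z$i\<bar>" using j(2) gt by linarith
        hence "(\<bar>w$j\<bar>)^2 < (\<bar>z$i\<bar>)^2" by (intro power_strict_mono) auto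
        hence "(w$j)^2 < (z$i)^2" by simp
        ultimately show ?thesis by simp
      qed
      finally have "(\<Sum>k\<in>UNIV. (y$k - z$k)^2) < (\<Sum>k\<in>UNIV. (w$k - z$k)^2)"
        by (simp add: h_def sum_subtractf)
      with opt[OF yC] show False by simp
    qed
  qed
  show "(\<forall>i. w$i \<noteq> 0 \<longrightarrow> w$i = z$i) \<and> (\<forall>i. w$i = 0 \<longrightarrow> \<bar>z$i\<bar> \<le> Ms s w)"
    using A B by blast
next
  assume R: "(\<forall>i. w$i \<noteq> 0 \<longrightarrow> w$i = z$i) \<and> (\<forall>i. w$i = 0 \<longrightarrow> \<bar>z$i\<bar> \<le> Ms s w)"
  let ?S = "{i. w$i \<noteq> 0}"
  let ?M = "Ms s w"
  have cS: "card ?S \<le> s" using wC by (simp add: Cs_def l0_def)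
  have M0: "0 \<le> ?M" by (rule Ms_nonneg)
  define f where "f i = (z$i)^2" for i
  have key: "(\<Sum>i\<in>UNIV. (w$i - z$i)^2) \<le> (\<Sum>i\<in>UNIV. (y$i - z$i)^2)" if yC: "y \<in> Cs s" for y
  proof -
    let ?T = "{i. y$i \<noteq> 0}"
    have cT: "card ?T \<le> s" using yC by (simp add: Cs_def l0_def)
    have "(\<Sum>i\<in>UNIV. (w$i - z$i)^2) = (\<Sum>i\<in>UNIV. if i \<in> -?S then f i else 0)"
      by (rule sum.cong) (use R in \<open>auto simp: f_def\<close>)
    also have "\<dots> = sum f (UNIV \<inter> -?S)" by (rule sum.inter_restrict[symmetric]) simp
    finally have wz: "(\<Sum>i\<in>UNIV. (w$i - z$i)^2) = sum f (-?S)" by simp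
    have "sum f (-?T) = sum f (UNIV \<inter> -?T)" by simp
    also have "\<dots> = (\<Sum>i\<in>UNIV. if i \<in> -?T then f i else 0)" by (rule sum.inter_restrict) simp
    also have "\<dots> \<le> (\<Sum>i\<in>UNIV. (y$i - z$i)^2)" by (rule sum_mono) (auto simp: f_def)
    finally have yz: "sum f (-?T) \<le> (\<Sum>i\<in>UNIV. (y$i - z$i)^2)" .
    have e1: "-?S - -?T = ?T - ?S" "-?T - -?S = ?S - ?T" "-?T \<inter> -?S = -?S \<inter> -?T" by auto
    have split1: "sum f (-?S) = sum f (-?S \<inter> -?T) + sum f (?T - ?S)"
      using sum.Int_Diff[of "-?S" f "-?T"] e1 by simp
    have split2: "sum f (-?T) = sum f (-?S \<inter> -?T) + sum f (?S - ?T)"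
      using sum.Int_Diff[of "-?T" f "-?S"] e1 by simp
    have b1: "sum f (?T - ?S) \<le> real (card (?T - ?S)) * ?M^2"
      by (rule sum_bounded_above) (use R in \<open>auto simp: f_def intro: sq_le_abs\<close>)
    have b2: "real (card (?S - ?T)) * ?M^2 \<le> sum f (?S - ?T)"
    proof (rule sum_bounded_below)
      fix i assume "i \<in> ?S - ?T"
      hence wi: "w$i \<noteq> 0" by simp
      have "?M \<le> \<bar>z$i\<bar>" using M3[OF s1 cS wi] R wi by simp
      thus "?M^2 \<le> f i" unfolding f_def using M0
        by (metis abs_of_nonneg power2_abs sq_le_abs)
    qed
    have b3: "real (card (?T - ?S)) * ?M^2 \<le> real (card (?S - ?T)) * ?M^2"
    proof (cases "?M = 0")
      case False
      hence "\<not> card ?S < s" using M2[OF s1] by blast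
      hence "card ?S = s" using cS by simp
      moreover have "card ?T = card (?T \<inter> ?S) + card (?T - ?S)" by (rule card_Int_Diff) simp
      moreover have "card ?S = card (?S \<inter> ?T) + card (?S - ?T)" by (rule card_Int_Diff) simp
      ultimately have "card (?T - ?S) \<le> card (?S - ?T)" using cT by (simp add: Int_commute)
      thus ?thesis by (intro mult_right_mono) auto
    qed simp
    show ?thesis using wz yz split1 split2 b1 b2 b3 by linarith
  qed
  show "w \<in> proj_Cs s z" using key wC by (simp add: proj_Cs_def nsq)
qed



theorem lemma4p2:
  fixes f :: "real^'n \<Rightarrow> real" and g :: "real^'n \<Rightarrow> real^'n"
    and D :: "real^'n^'n" and s :: nat and x :: "real^'n"
  assumes grad: "\<forall>y. (f has_derivative (\<lambda>h. g y \<bullet> h)) (at y)"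
    and cont: "continuous_on UNIV g"
    and spos: "s \<ge> 1"
    and Ddiag: "\<forall>i j. i \<noteq> j \<longrightarrow> D $ i $ j = 0"
    and Dpos: "\<forall>i. D $ i $ i > 0"
    and xCs: "x \<in> Cs s"
  shows "D_stationary s D g x \<longleftrightarrow>
           (\<forall>i. (i \<in> I1 x \<longrightarrow> \<bar>g x $ i\<bar> = 0) \<and>
                (i \<in> I0 x \<longrightarrow> \<bar>g x $ i\<bar> \<le> sqrt (D $ i $ i) * Ms s (diag_sqrt D *v x)))"
proof -
  define r where "r i = sqrt (D $ i $ i)" for i
  have rpos: "r i > 0" for i using Dpos by (simp add: r_def)
  define R where "R = diag_sqrt D"
  define Ri :: "real^'n^'n" where "Ri = (\<chi> i j. if i = j then 1 / r i else 0)"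
  have Rv: "(R *v v) $ i = r i * v $ i" for v i
    by (simp add: R_def diag_sqrt_def matrix_vector_mult_def r_def if_distrib[where f="\<lambda>a. a * _"] cong: if_cong)
  have Riv: "(Ri *v v) $ i = v $ i / r i" for v i
    by (simp add: Ri_def matrix_vector_mult_def if_distrib[where f="\<lambda>a. a * _"] cong: if_cong)
  have m1: "(R ** Ri) $ i $ j = (if i = j then 1 else 0)" for i j
    using rpos[of i] by (simp add: matrix_matrix_mult_def R_def Ri_def diag_sqrt_def r_def
        if_distrib[where f="\<lambda>a. a * _"] cong: if_cong) (metis less_irrefl)
  have m2: "(Ri ** R) $ i $ j = (if i = j then 1 else 0)" for i j
    using rpos[of i] by (simp add: matrix_matrix_mult_def R_def Ri_def diag_sqrt_def r_def
        if_distrib[where f="\<lambda>a. a * _"] cong: if_cong) (metis less_irrefl)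
  have RRi: "R ** Ri = mat 1" by (simp add: vec_eq_iff m1 mat_def)
  have RiR: "Ri ** R = mat 1" by (simp add: vec_eq_iff m2 mat_def)
  have inv: "matrix_inv R = Ri"
  proof -
    have "R ** matrix_inv R = mat 1 \<and> matrix_inv R ** R = mat 1"
      unfolding matrix_inv_def using someI[of "\<lambda>A'. R ** A' = mat 1 \<and> A' ** R = mat 1" Ri] RRi RiR by simp
    hence "matrix_inv R = matrix_inv R ** (R ** Ri)" using RRi by (simp add: matrix_mul_rid)
    also have "\<dots> = Ri" using \<open>R ** matrix_inv R = mat 1 \<and> matrix_inv R ** R = mat 1\<close>
      by (simp add: matrix_mul_assoc matrix_mul_lid)
    finally show ?thesis .
  qed
  define w where "w = R *v x"
  define z where "z = R *v x - Ri *v g x"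
  have wi: "w $ i = r i * x $ i" for i by (simp add: w_def Rv)
  have zi: "z $ i = r i * x $ i - g x $ i / r i" for i by (simp add: z_def Rv Riv)
  have wnz: "(w $ i \<noteq> 0) = (x $ i \<noteq> 0)" for i using rpos[of i] by (simp add: wi)
  have wC: "w \<in> Cs s" using xCs wnz by (simp add: Cs_def l0_def)
  have "D_stationary s D g x \<longleftrightarrow> w \<in> proj_Cs s z"
  proof
    assume "D_stationary s D g x"
    hence "x \<in> (\<lambda>y. Ri *v y) ` proj_Cs s z"
      unfolding D_stationary_def inv[unfolded R_def] by (simp add: z_def R_def)
    then obtain y where y: "y \<in> proj_Cs s z" "x = Ri *v y" by (rule imageE) simp
    have "w = y" using y(2) RRi by (simp add: w_def matrix_vector_mul_assoc)
    thus "w \<in> proj_Cs s z" using y by simp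
  next
    assume wp: "w \<in> proj_Cs s z"
    have xw: "x = Ri *v w" using RiR by (simp add: w_def matrix_vector_mul_assoc)
    have "x \<in> (\<lambda>y. Ri *v y) ` proj_Cs s z" using xw wp by (rule image_eqI)
    thus "D_stationary s D g x"
      unfolding D_stationary_def inv[unfolded R_def] using xCs by (simp add: z_def R_def)
  qed
  also have "\<dots> \<longleftrightarrow> (\<forall>i. w$i \<noteq> 0 \<longrightarrow> w$i = z$i) \<and> (\<forall>i. w$i = 0 \<longrightarrow> \<bar>z$i\<bar> \<le> Ms s w)"
    by (rule proj_char[OF spos wC])
  also have "\<dots> \<longleftrightarrow> (\<forall>i. (i \<in> I1 x \<longrightarrow> \<bar>g x $ i\<bar> = 0) \<and>
                (i \<in> I0 x \<longrightarrow> \<bar>g x $ i\<bar> \<le> sqrt (D $ i $ i) * Ms s (diag_sqrt D *v x)))"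
  proof -
    have e1: "(w$i \<noteq> 0 \<longrightarrow> w$i = z$i) \<longleftrightarrow> (i \<in> I1 x \<longrightarrow> \<bar>g x $ i\<bar> = 0)" for i
    proof -
      have "w$i = z$i \<longleftrightarrow> g x $ i / r i = 0" by (simp add: wi zi)
      also have "\<dots> \<longleftrightarrow> g x $ i = 0" using rpos[of i] by simp
      finally show ?thesis using wnz[of i] by (simp add: I1_def)
    qed
    have e2: "(w$i = 0 \<longrightarrow> \<bar>z$i\<bar> \<le> Ms s w) \<longleftrightarrow>
       (i \<in> I0 x \<longrightarrow> \<bar>g x $ i\<bar> \<le> sqrt (D $ i $ i) * Ms s (diag_sqrt D *v x))" for i
    proof (cases "x$i = 0")
      case True
      have "\<bar>z$i\<bar> = \<bar>g x $ i\<bar> / r i" using rpos[of i] True by (simp add: zi)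
      hence "\<bar>z$i\<bar> \<le> Ms s w \<longleftrightarrow> \<bar>g x $ i\<bar> \<le> Ms s w * r i"
        using rpos[of i] by (simp add: pos_divide_le_eq)
      thus ?thesis using True wnz[of i] by (simp add: I0_def r_def R_def w_def mult.commute)
    next
      case False
      thus ?thesis using wnz[of i] by (simp add: I0_def)
    qed
    show ?thesis using e1 e2 by blast
  qed
  finally show ?thesis .
qed

end
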